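(* Let $(M,g)$ be a $4$-dimensional semi-Riemannian manifold whose metric $g$ is an Einstein metric, equipped with a semi-symmetric metric connection $\nabla$ with associated one-form $\pi$. Then $(M,g,\nabla)$ is a generalized Einstein manifold if and only if $$-\overset{\circ}{\nabla}_\mu\pi_\nu-\overset{\circ}{\nabla}_\nu\pi_\mu+2\pi_\nu\pi_\mu+\frac12 g_{\mu\nu}\overset{\circ}{\nabla}_\lambda\pi^\lambda-\frac12 g_{\mu\nu}\pi_\lambda\pi^\lambda=0.$$
   Context: $\overset{\circ}{\nabla}$, $\overset{\circ}{R}_{\mu\nu}$ are the Levi-Civita connection and Ricci tensor of $g$; indices are raised/lowered with $g$. $g$ is an Einstein metric if $\overset{\circ}{R}_{\mu\nu}=\lambda g_{\mu\nu}$ for some smooth function $\lambda$. A semi-symmetric metric connection is an affine connection $\nabla$ with $\nabla g=0$ whose torsion $T(\omega,X,Y)=\omega(\nabla_XY-\nabla_YX-[X,Y])$ equals $\omega(\pi(Y)X-\pi(X)Y)$ for a one-form $\pi$. Curvature conventions: $\mathrm{Riem}(\omega,Z,X,Y)=\omega(\nabla_X\nabla_YZ-\nabla_Y\nabla_XZ-\nabla_{[X,Y]}Z)$, $R_{\mu\nu}=\mathrm{Riem}(dx^\alpha,\partial_\mu,\partial_\alpha,\partial_\nu)$, $R_{(\mu\nu)}=\frac12(R_{\mu\nu}+R_{\nu\mu})$. $(M,g,\nabla)$ is a generalized Einstein manifold if $R_{(\mu\nu)}=\lambda' g_{\mu\nu}$ for some smooth function $\lambda'$. *)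

theory Defs
  imports "HOL-Analysis.Analysis"
begin

text \<open>Points of a coordinate chart are vectors in
real^4; coordinate indices range over the 4-element type 4.  All tensor fields are
given by their components in the coordinate frame.\<close>

type_synonym pt = "real^4"
type_synonym idx = 4

definition pd :: "(pt \<Rightarrow> real) \<Rightarrow> idx \<Rightarrow> pt \<Rightarrow> real" where
  "pd f i x = frechet_derivative f (at x) (axis i 1)"

fun pds :: "idx list \<Rightarrow> (pt \<Rightarrow> real) \<Rightarrow> pt \<Rightarrow> real" where
  "pds [] f = f"
| "pds (i # is) f = pd (pds is f) i"

definition smooth_on :: "pt set \<Rightarrow> (pt \<Rightarrow> real) \<Rightarrow> bool" where
  "smooth_on U f \<longleftrightarrow> (\<forall>is. \<forall>x\<in>U. pds is f differentiable (at x))"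

definition semi_riemannian_metric :: "pt set \<Rightarrow> (pt \<Rightarrow> real^4^4) \<Rightarrow> bool" where
  "semi_riemannian_metric U g \<longleftrightarrow>
     (\<forall>m n. smooth_on U (\<lambda>x. g x $ m $ n)) \<and>
     (\<forall>x\<in>U. \<forall>m n. g x $ m $ n = g x $ n $ m) \<and>
     (\<forall>x\<in>U. det (g x) \<noteq> 0)"

definition ginv :: "(pt \<Rightarrow> real^4^4) \<Rightarrow> pt \<Rightarrow> idx \<Rightarrow> idx \<Rightarrow> real" where
  "ginv g x m n = matrix_inv (g x) $ m $ n"

text \<open>Connection coefficients: Gam x l m n = Gamma^l_{mn}, with
  nabla_{d_m} d_n = sum_l Gamma^l_{mn} d_l.\<close>
type_synonym conn = "pt \<Rightarrow> idx \<Rightarrow> idx \<Rightarrow> idx \<Rightarrow> real"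

definition LC :: "(pt \<Rightarrow> real^4^4) \<Rightarrow> conn" where
  "LC g x l m n = (1/2) * (\<Sum>s\<in>UNIV. ginv g x l s *
      (pd (\<lambda>y. g y $ s $ n) m x + pd (\<lambda>y. g y $ s $ m) n x - pd (\<lambda>y. g y $ m $ n) s x))"

text \<open>Riemann tensor Riem(dx^a, d_b, d_m, d_n) of a connection with the convention
  Riem(w,Z,X,Y) = w(nabla_X nabla_Y Z - nabla_Y nabla_X Z - nabla_[X,Y] Z).\<close>
definition Riem :: "conn \<Rightarrow> pt \<Rightarrow> idx \<Rightarrow> idx \<Rightarrow> idx \<Rightarrow> idx \<Rightarrow> real" where
  "Riem G x a b m n =
     pd (\<lambda>y. G y a n b) m x - pd (\<lambda>y. G y a m b) n x
     + (\<Sum>s\<in>UNIV. G x s n b * G x a m s - G x s m b * G x a n s)"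

definition Ric :: "conn \<Rightarrow> pt \<Rightarrow> idx \<Rightarrow> idx \<Rightarrow> real" where
  "Ric G x m n = (\<Sum>a\<in>UNIV. Riem G x a m a n)"

definition sym_Ric :: "conn \<Rightarrow> pt \<Rightarrow> idx \<Rightarrow> idx \<Rightarrow> real" where
  "sym_Ric G x m n = (Ric G x m n + Ric G x n m) / 2"

definition einstein_metric :: "pt set \<Rightarrow> (pt \<Rightarrow> real^4^4) \<Rightarrow> bool" where
  "einstein_metric U g \<longleftrightarrow>
     (\<exists>lam. smooth_on U lam \<and>
        (\<forall>x\<in>U. \<forall>m n. Ric (LC g) x m n = lam x * g x $ m $ n))"

text \<open>Semi-symmetric metric connection with one-form pi (components pi x n):
  smooth coefficients, nabla g = 0, torsion T(dx^l, d_m, d_n) = delta^l_m pi_n - delta^l_n pi_m.\<close>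
definition semi_symmetric_metric_connection ::
    "pt set \<Rightarrow> (pt \<Rightarrow> real^4^4) \<Rightarrow> conn \<Rightarrow> (pt \<Rightarrow> idx \<Rightarrow> real) \<Rightarrow> bool" where
  "semi_symmetric_metric_connection U g G p \<longleftrightarrow>
     (\<forall>l m n. smooth_on U (\<lambda>x. G x l m n)) \<and>
     (\<forall>n. smooth_on U (\<lambda>x. p x n)) \<and>
     (\<forall>x\<in>U. \<forall>m n r. pd (\<lambda>y. g y $ n $ r) m x
          - (\<Sum>s\<in>UNIV. G x s m n * g x $ s $ r)
          - (\<Sum>s\<in>UNIV. G x s m r * g x $ n $ s) = 0) \<and>
     (\<forall>x\<in>U. \<forall>l m n. G x l m n - G x l n m =
          (if l = m then p x n else 0) - (if l = n then p x m else 0))"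

definition generalized_einstein :: "pt set \<Rightarrow> (pt \<Rightarrow> real^4^4) \<Rightarrow> conn \<Rightarrow> bool" where
  "generalized_einstein U g G \<longleftrightarrow>
     (\<exists>lam'. smooth_on U lam' \<and>
        (\<forall>x\<in>U. \<forall>m n. sym_Ric G x m n = lam' x * g x $ m $ n))"

definition cov_LC :: "(pt \<Rightarrow> real^4^4) \<Rightarrow> (pt \<Rightarrow> idx \<Rightarrow> real) \<Rightarrow> pt \<Rightarrow> idx \<Rightarrow> idx \<Rightarrow> real" where
  "cov_LC g w x m n = pd (\<lambda>y. w y n) m x - (\<Sum>l\<in>UNIV. LC g x l m n * w x l)"

end

theory Submission
  imports Defs
begin


lemma pd_eqI: "(f has_derivative D) (at x) \<Longrightarrow> pd f i x = D (axis i 1)"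
  unfolding pd_def using frechet_derivative_at by metis

lemma pd_cong:
  assumes "open U" "x \<in> U" "\<And>y. y \<in> U \<Longrightarrow> f y = f' y"
  shows "pd f i x = pd f' i x"
proof -
  have "\<And>D. (f has_derivative D) (at x) \<longleftrightarrow> (f' has_derivative D) (at x)"
    using has_derivative_transform_within_open[OF _ assms(1,2)] assms(3) by metis
  then show ?thesis unfolding pd_def frechet_derivative_def by simp
qed

lemma diff_cong:
  assumes "open U" "x \<in> U" "\<And>y. y \<in> U \<Longrightarrow> f y = f' y" "f differentiable at x"
  shows "f' differentiable at x"
  using assms has_derivative_transform_within_open unfolding differentiable_def by metis

lemma fdw: "f differentiable at x \<Longrightarrow> (f has_derivative (\<lambda>v. frechet_derivative f (at x) v)) (at x)"
  using frechet_derivative_works by (metis eta_contract_eq)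

lemma pd_add: "f differentiable at x \<Longrightarrow> g differentiable at x \<Longrightarrow>
   pd (\<lambda>y. f y + g y) i x = pd f i x + pd g i x"
  unfolding pd_def[of f] pd_def[of g] by (rule pd_eqI, intro derivative_intros fdw)

lemma pd_diff: "f differentiable at x \<Longrightarrow> g differentiable at x \<Longrightarrow>
   pd (\<lambda>y. f y - g y) i x = pd f i x - pd g i x"
  unfolding pd_def[of f] pd_def[of g] by (rule pd_eqI, intro derivative_intros fdw)

lemma pd_mult: "f differentiable at x \<Longrightarrow> g differentiable at x \<Longrightarrow>
   pd (\<lambda>y. f y * g y) i x = f x * pd g i x + pd f i x * g x"
  unfolding pd_def[of f] pd_def[of g] by (rule pd_eqI, intro derivative_intros fdw)

lemma pd_const: "pd (\<lambda>y. c) i x = 0"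
  by (rule pd_eqI[where D="\<lambda>_. 0", simplified]) (rule has_derivative_const)

lemma pd_sum: "finite S \<Longrightarrow> (\<And>a. a \<in> S \<Longrightarrow> f a differentiable at x) \<Longrightarrow>
   pd (\<lambda>y. \<Sum>a\<in>S. f a y) i x = (\<Sum>a\<in>S. pd (f a) i x)"
proof -
  assume "\<And>a. a \<in> S \<Longrightarrow> f a differentiable at x"
  then have "((\<lambda>y. \<Sum>a\<in>S. f a y) has_derivative (\<lambda>v. \<Sum>a\<in>S. frechet_derivative (f a) (at x) v)) (at x)"
    by (intro has_derivative_sum fdw)
  then show ?thesis unfolding pd_def[of "f _"] by (rule pd_eqI)
qed

lemma pd_inverse: "f differentiable at x \<Longrightarrow> f x \<noteq> 0 \<Longrightarrow>
   pd (\<lambda>y. inverse (f y)) i x = - (inverse (f x) * pd f i x * inverse (f x))"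
  unfolding pd_def[of f] by (rule pd_eqI, intro derivative_intros fdw) auto

lemma pds_snoc: "pds (is @ [i]) f = pds is (pd f i)"
  by (induction "is") auto

definition smn :: "pt set \<Rightarrow> nat \<Rightarrow> (pt \<Rightarrow> real) \<Rightarrow> bool" where
  "smn U n f \<longleftrightarrow> (\<forall>is. length is \<le> n \<longrightarrow> (\<forall>x\<in>U. pds is f differentiable at x))"

lemma smooth_on_smn: "smooth_on U f \<longleftrightarrow> (\<forall>n. smn U n f)"
  unfolding smooth_on_def smn_def by blast

lemma smn_0: "smn U 0 f \<longleftrightarrow> (\<forall>x\<in>U. f differentiable at x)"
  unfolding smn_def by auto

lemma smn_Suc: "smn U (Suc n) f \<longleftrightarrow> (\<forall>x\<in>U. f differentiable at x) \<and> (\<forall>i. smn U n (pd f i))"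
proof
  assume a: "smn U (Suc n) f"
  show "(\<forall>x\<in>U. f differentiable at x) \<and> (\<forall>i. smn U n (pd f i))"
  proof (intro conjI allI)
    show "\<forall>x\<in>U. f differentiable at x" using a unfolding smn_def
      by (metis le0 list.size(3) pds.simps(1))
    fix i show "smn U n (pd f i)" unfolding smn_def
    proof (intro allI impI)
      fix "is" :: "idx list" assume "length is \<le> n"
      then have "length (is @ [i]) \<le> Suc n" by simp
      then show "\<forall>x\<in>U. pds is (pd f i) differentiable at x"
        using a[unfolded smn_def, rule_format, of "is @ [i]"] by (simp add: pds_snoc)
    qed
  qed
next
  assume a: "(\<forall>x\<in>U. f differentiable at x) \<and> (\<forall>i. smn U n (pd f i))"
  show "smn U (Suc n) f" unfolding smn_def
  proof (intro allI impI)
    fix "is" :: "idx list" assume l: "length is \<le> Suc n"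
    show "\<forall>x\<in>U. pds is f differentiable at x"
    proof (cases "is" rule: rev_cases)
      case Nil then show ?thesis using a by simp
    next
      case (snoc js i)
      then have "length js \<le> n" using l by simp
      then show ?thesis using a unfolding snoc pds_snoc smn_def by blast
    qed
  qed
qed

lemma smn_mono: "smn U (Suc n) f \<Longrightarrow> smn U n f"
  unfolding smn_def by auto

lemma pds_cong: "open U \<Longrightarrow> (\<And>z. z \<in> U \<Longrightarrow> f z = f' z) \<Longrightarrow> y \<in> U \<Longrightarrow> pds is f y = pds is f' y"
proof (induction "is" arbitrary: y)
  case Nil then show ?case by simp
next
  case (Cons i "is")
  then show ?case by (simp add: pd_cong[of U y "pds is f" "pds is f'"])
qed

lemma smn_cong: assumes "open U" "\<And>y. y \<in> U \<Longrightarrow> f y = f' y" "smn U n f" shows "smn U n f'"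
  unfolding smn_def
proof (intro allI impI ballI)
  fix "is" :: "idx list" and x assume "length is \<le> n" "x \<in> U"
  then have d: "pds is f differentiable at x" using assms(3) unfolding smn_def by blast
  show "pds is f' differentiable at x"
  proof (rule diff_cong[OF assms(1) \<open>x \<in> U\<close> _ d])
    fix y assume "y \<in> U" then show "pds is f y = pds is f' y" using pds_cong[OF assms(1), of f f'] assms(2) by blast
  qed
qed

lemma smn_cong': "smn U n f \<Longrightarrow> open U \<Longrightarrow> (\<And>y. y \<in> U \<Longrightarrow> f y = f' y) \<Longrightarrow> smn U n f'"
  using smn_cong by blast

lemma pd_const_fun: "pd (\<lambda>y. c) i = (\<lambda>y. 0)"
  using pd_const by blast

lemma smn_const: "smn U n (\<lambda>y. c)"
proof (induction n arbitrary: c)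
  case 0 then show ?case by (simp add: smn_0)
next
  case (Suc n) then show ?case by (simp add: smn_Suc pd_const_fun)
qed

lemma smn_add: "open U \<Longrightarrow> smn U n f \<Longrightarrow> smn U n g \<Longrightarrow> smn U n (\<lambda>y. f y + g y)"
proof (induction n arbitrary: f g)
  case 0 then show ?case by (simp add: smn_0)
next
  case (Suc n)
  show ?case unfolding smn_Suc
  proof (intro conjI allI)
    show "\<forall>x\<in>U. (\<lambda>y. f y + g y) differentiable at x" using Suc.prems by (simp add: smn_Suc)
    fix i
    have h: "smn U n (\<lambda>y. pd f i y + pd g i y)" using Suc by (simp add: smn_Suc)
    show "smn U n (pd (\<lambda>y. f y + g y) i)"
      by (rule smn_cong'[OF h Suc.prems(1)]) (use Suc.prems in \<open>auto simp: smn_Suc pd_add\<close>)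
  qed
qed

lemma smn_mult: "open U \<Longrightarrow> smn U n f \<Longrightarrow> smn U n g \<Longrightarrow> smn U n (\<lambda>y. f y * g y)"
proof (induction n arbitrary: f g)
  case 0 then show ?case by (simp add: smn_0)
next
  case (Suc n)
  show ?case unfolding smn_Suc
  proof (intro conjI allI)
    show "\<forall>x\<in>U. (\<lambda>y. f y * g y) differentiable at x" using Suc.prems by (simp add: smn_Suc)
    fix i
    have h: "smn U n (\<lambda>y. f y * pd g i y + pd f i y * g y)"
      using Suc smn_mono by (intro smn_add) (auto simp: smn_Suc)
    show "smn U n (pd (\<lambda>y. f y * g y) i)"
      by (rule smn_cong'[OF h Suc.prems(1)]) (use Suc.prems in \<open>auto simp: smn_Suc pd_mult\<close>)
  qed
qed

lemma smn_inverse: "open U \<Longrightarrow> smn U n f \<Longrightarrow> (\<And>y. y \<in> U \<Longrightarrow> f y \<noteq> 0) \<Longrightarrow> smn U n (\<lambda>y. inverse (f y))"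
proof (induction n arbitrary: f)
  case 0 then show ?case by (simp add: smn_0)
next
  case (Suc n)
  show ?case unfolding smn_Suc
  proof (intro conjI allI)
    show "\<forall>x\<in>U. (\<lambda>y. inverse (f y)) differentiable at x" using Suc.prems by (simp add: smn_Suc)
    fix i
    have iv: "smn U n (\<lambda>y. inverse (f y))" using Suc smn_mono by blast
    have h: "smn U n (\<lambda>y. (-1) * (inverse (f y) * pd f i y * inverse (f y)))"
      using Suc.prems iv by (intro smn_mult smn_const) (auto simp: smn_Suc)
    show "smn U n (pd (\<lambda>y. inverse (f y)) i)"
      by (rule smn_cong'[OF h Suc.prems(1)]) (use Suc.prems in \<open>auto simp: smn_Suc pd_inverse\<close>)
  qed
qed

lemma smn_sum: assumes "open U" "finite S" "\<And>a. a \<in> S \<Longrightarrow> smn U n (f a)" shows "smn U n (\<lambda>y. \<Sum>a\<in>S. f a y)"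
  using assms(2,3) proof (induction S rule: finite_induct)
  case empty then show ?case by (simp add: smn_const)
next
  case (insert a S) then show ?case using assms(1) by (simp add: smn_add)
qed

lemma sm_const: "smooth_on U (\<lambda>y. c)" by (simp add: smooth_on_smn smn_const)
lemma sm_add: "open U \<Longrightarrow> smooth_on U f \<Longrightarrow> smooth_on U g \<Longrightarrow> smooth_on U (\<lambda>y. f y + g y)"
  by (simp add: smooth_on_smn smn_add)
lemma sm_mult: "open U \<Longrightarrow> smooth_on U f \<Longrightarrow> smooth_on U g \<Longrightarrow> smooth_on U (\<lambda>y. f y * g y)"
  by (simp add: smooth_on_smn smn_mult)
lemma sm_diff: "open U \<Longrightarrow> smooth_on U f \<Longrightarrow> smooth_on U g \<Longrightarrow> smooth_on U (\<lambda>y. f y - g y)"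
proof -
  assume a: "open U" "smooth_on U f" "smooth_on U g"
  have "smooth_on U (\<lambda>y. f y + (-1) * g y)" using a by (intro sm_add sm_mult sm_const)
  then show ?thesis by simp
qed
lemma sm_inverse: "open U \<Longrightarrow> smooth_on U f \<Longrightarrow> (\<And>y. y \<in> U \<Longrightarrow> f y \<noteq> 0) \<Longrightarrow> smooth_on U (\<lambda>y. inverse (f y))"
  by (simp add: smooth_on_smn smn_inverse)
lemma sm_sum: "open U \<Longrightarrow> finite S \<Longrightarrow> (\<And>a. a \<in> S \<Longrightarrow> smooth_on U (f a)) \<Longrightarrow> smooth_on U (\<lambda>y. \<Sum>a\<in>S. f a y)"
  by (simp add: smooth_on_smn smn_sum)
lemma sm_pd: "smooth_on U f \<Longrightarrow> smooth_on U (pd f i)"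
  unfolding smooth_on_def by (metis pds_snoc)
lemma sm_diffble: "smooth_on U f \<Longrightarrow> x \<in> U \<Longrightarrow> f differentiable at x"
  unfolding smooth_on_def by (metis pds.simps(1))

lemma diff_prod: fixes f :: "'i \<Rightarrow> pt \<Rightarrow> real" shows "(\<And>i. i \<in> I \<Longrightarrow> f i differentiable at x) \<Longrightarrow> (\<lambda>y. \<Prod>i\<in>I. f i y) differentiable at x"
proof -
  assume "\<And>i. i \<in> I \<Longrightarrow> f i differentiable at x"
  then have "\<forall>i\<in>I. \<exists>D. (f i has_derivative D) (at x)" by (auto simp: differentiable_def)
  then obtain D where D: "\<forall>i\<in>I. (f i has_derivative D i) (at x)" by (metis bchoice)
  have "((\<lambda>y. \<Prod>i\<in>I. f i y) has_derivative (\<lambda>y. \<Sum>i\<in>I. D i y * (\<Prod>j\<in>I - {i}. f j x))) (at x)"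
    by (rule has_derivative_prod) (use D in auto)
  then show ?thesis unfolding differentiable_def by blast
qed

lemma diff_det:
  fixes M :: "pt \<Rightarrow> real^'n^'n"
  assumes "\<And>i j. (\<lambda>y. M y $ i $ j) differentiable at x"
  shows "(\<lambda>y. det (M y)) differentiable at x"
  unfolding det_def
  by (intro differentiable_sum differentiable_mult differentiable_const diff_prod ballI assms)
     (simp add: finite_permutations)

lemma inv_mat:
  fixes A :: "real^'n^'n"
  assumes "det A \<noteq> 0"
  shows "A ** matrix_inv A = mat 1" "matrix_inv A ** A = mat 1"
proof -
  have "\<exists>A'. A ** A' = mat 1 \<and> A' ** A = mat 1" using assms invertible_det_nz invertible_def by blast
  then have "A ** matrix_inv A = mat 1 \<and> matrix_inv A ** A = mat 1"
    unfolding matrix_inv_def by (rule someI_ex)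
  then show "A ** matrix_inv A = mat 1" "matrix_inv A ** A = mat 1" by auto
qed

lemma inv_comp:
  fixes A :: "real^'n^'n"
  assumes "det A \<noteq> 0"
  shows "(\<Sum>s\<in>UNIV. A $ i $ s * matrix_inv A $ s $ j) = (if i = j then 1 else 0)"
        "(\<Sum>s\<in>UNIV. matrix_inv A $ i $ s * A $ s $ j) = (if i = j then 1 else 0)"
proof -
  have 1: "(A ** matrix_inv A) $ i $ j = mat 1 $ i $ j" "(matrix_inv A ** A) $ i $ j = mat 1 $ i $ j"
    using inv_mat[OF assms] by simp_all
  show "(\<Sum>s\<in>UNIV. A $ i $ s * matrix_inv A $ s $ j) = (if i = j then 1 else 0)"
    using 1(1) unfolding matrix_matrix_mult_def mat_def by simp
  show "(\<Sum>s\<in>UNIV. matrix_inv A $ i $ s * A $ s $ j) = (if i = j then 1 else 0)"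
    using 1(2) unfolding matrix_matrix_mult_def mat_def by simp
qed

lemma inv_sym:
  fixes A :: "real^'n^'n"
  assumes "det A \<noteq> 0" "transpose A = A"
  shows "transpose (matrix_inv A) = matrix_inv A"
proof -
  let ?B = "matrix_inv A"
  have "transpose ?B ** A = mat 1"
    using arg_cong[OF inv_mat(1)[OF assms(1)], of transpose] assms(2)
    by (simp add: matrix_transpose_mul transpose_mat)
  then have "transpose ?B = (transpose ?B ** A) ** ?B"
    using inv_mat(1)[OF assms(1)] by (metis matrix_mul_assoc matrix_mul_rid)
  then show ?thesis using \<open>transpose ?B ** A = mat 1\<close> by simp
qed

lemma inv_cramer:
  fixes A :: "real^'n^'n"
  assumes "det A \<noteq> 0"
  shows "matrix_inv A $ i $ j = det (\<chi> a b. if b = i then (if a = j then 1 else 0) else A$a$b) / det A"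
proof -
  let ?x = "\<chi> k. matrix_inv A $ k $ j"
  let ?b = "\<chi> a. if a = j then (1::real) else 0"
  have "A *v ?x = ?b"
    using inv_comp(1)[OF assms] by (simp add: matrix_vector_mult_def vec_eq_iff)
  then have "?x = (\<chi> k. det(\<chi> a b. if b=k then ?b$a else A$a$b) / det A)"
    using cramer[OF assms] by blast
  then have "?x $ i = det(\<chi> a b. if b=i then ?b$a else A$a$b) / det A" by simp
  moreover have "(\<chi> a b. if b=i then ?b$a else A$a$b) = (\<chi> a b. if b = i then (if a = j then 1 else 0) else A$a$b)"
    by (simp add: vec_eq_iff)
  ultimately show ?thesis by simp
qed



lemma if0_mult: "(if c then a else 0) * (b::real) = (if c then a * b else 0)"
  "(b::real) * (if c then a else 0) = (if c then b * a else 0)" by auto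

lemma sum_if0: "(\<Sum>s\<in>S. if c then f s else (0::real)) = (if c then (\<Sum>s\<in>S. f s) else 0)"
  by auto

lemma ricci_alg:
  fixes gg :: "idx \<Rightarrow> idx \<Rightarrow> real" and pp PP :: "idx \<Rightarrow> real" and LL KK dgg :: "idx \<Rightarrow> idx \<Rightarrow> idx \<Rightarrow> real"
    and dpp dPP :: "idx \<Rightarrow> idx \<Rightarrow> real" and dL dK :: "idx \<Rightarrow> idx \<Rightarrow> idx \<Rightarrow> idx \<Rightarrow> real"
  assumes gs: "\<And>i j. gg i j = gg j i"
  and gP: "\<And>s. (\<Sum>a\<in>UNIV. gg a s * PP a) = pp s"
  and Lsym: "\<And>l m n. LL l m n = LL l n m"
  and F1: "\<And>k i j. dgg k i j = (\<Sum>s\<in>UNIV. LL s k i * gg s j + LL s k j * gg i s)"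
  and F2: "\<And>n m. (\<Sum>a\<in>UNIV. dgg n a m * PP a + gg a m * dPP n a) = dpp n m"
  and dgs: "\<And>k i j. dgg k i j = dgg k j i"
  and Kd: "\<And>l m n. KK l m n = (if l = m then pp n else 0) - gg m n * PP l"
  and dKd: "\<And>k l m n. dK k l m n = (if l = m then dpp k n else 0) - (gg m n * dPP k l + dgg k m n * PP l)"
  shows "(\<Sum>a\<in>UNIV. dL a a n m + dK a a n m - (dL n a a m + dK n a a m)
            + (\<Sum>s\<in>UNIV. (LL s n m + KK s n m) * (LL a a s + KK a a s) - (LL s a m + KK s a m) * (LL a n s + KK a n s)))
   = (\<Sum>a\<in>UNIV. dL a a n m - dL n a a m + (\<Sum>s\<in>UNIV. LL s n m * LL a a s - LL s a m * LL a n s))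
     - 2 * (dpp n m - (\<Sum>l\<in>UNIV. LL l n m * pp l)) - gg n m * (\<Sum>a\<in>UNIV. dPP a a + (\<Sum>s\<in>UNIV. LL a a s * PP s))
     + 2 * pp m * pp n - 2 * gg n m * (\<Sum>s\<in>UNIV. PP s * pp s)"
proof -
  define Q where "Q = (\<Sum>s\<in>UNIV. PP s * pp s)"
  define l where "l s = (\<Sum>a\<in>UNIV. LL a a s)" for s
  have A: "(\<Sum>a\<in>UNIV. dK a a n m) = dpp n m - (\<Sum>a\<in>UNIV. dgg a n m * PP a) - gg n m * (\<Sum>a\<in>UNIV. dPP a a)"
    by (simp add: dKd sum_subtractf sum.distrib sum_distrib_left)
  have B: "(\<Sum>a\<in>UNIV. dK n a a m) = 3 * dpp n m"
  proof -
    have "(\<Sum>a\<in>UNIV. dK n a a m) = 4 * dpp n m - (\<Sum>a\<in>UNIV. dgg n a m * PP a + gg a m * dPP n a)"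
      by (simp add: dKd sum_subtractf sum.distrib algebra_simps)
    then show ?thesis using F2 by simp
  qed
  have C: "(\<Sum>a\<in>UNIV. KK a a s) = 3 * pp s" for s
  proof -
    have "(\<Sum>a\<in>UNIV. KK a a s) = 4 * pp s - (\<Sum>a\<in>UNIV. gg a s * PP a)"
      by (simp add: Kd sum_subtractf)
    then show ?thesis using gP by simp
  qed
  have S1: "(\<Sum>a\<in>UNIV. \<Sum>s\<in>UNIV. (LL s n m + KK s n m) * (LL a a s + KK a a s))
      = (\<Sum>s\<in>UNIV. (LL s n m + KK s n m) * (l s + 3 * pp s))"
  proof -
    have "\<And>s. (\<Sum>a\<in>UNIV. (LL s n m + KK s n m) * (LL a a s + KK a a s)) = (LL s n m + KK s n m) * (l s + 3 * pp s)"
      by (simp add: sum_distrib_left[symmetric] sum.distrib l_def C)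
    then show ?thesis by (subst sum.swap) simp
  qed
  have S2: "(\<Sum>a\<in>UNIV. \<Sum>s\<in>UNIV. LL s n m * LL a a s) = (\<Sum>s\<in>UNIV. LL s n m * l s)"
    by (subst sum.swap) (simp add: l_def sum_distrib_left)
  have K1: "(\<Sum>s\<in>UNIV. KK s n m * l s) = pp m * l n - gg n m * (\<Sum>s\<in>UNIV. PP s * l s)"
    by (simp add: Kd algebra_simps sum_subtractf sum_distrib_left if0_mult sum_if0)
  have K2: "(\<Sum>s\<in>UNIV. KK s n m * pp s) = pp n * pp m - gg n m * Q"
    by (simp add: Kd Q_def algebra_simps sum_subtractf sum_distrib_left if0_mult sum_if0)
  have X1: "(\<Sum>a\<in>UNIV. \<Sum>s\<in>UNIV. LL s a m * KK a n s)
      = (\<Sum>s\<in>UNIV. LL s n m * pp s) - (\<Sum>a\<in>UNIV. PP a * (\<Sum>s\<in>UNIV. LL s a m * gg n s))"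
    by (simp add: Kd algebra_simps sum_subtractf sum_distrib_left if0_mult sum_if0)
  have X2: "(\<Sum>a\<in>UNIV. \<Sum>s\<in>UNIV. KK s a m * LL a n s)
      = pp m * l n - (\<Sum>a\<in>UNIV. \<Sum>s\<in>UNIV. gg a m * PP s * LL a n s)"
    by (simp add: Kd l_def algebra_simps sum_subtractf sum_distrib_left if0_mult sum_if0 Lsym[of _ n])
  have gP': "(\<Sum>a\<in>UNIV. gg s a * PP a) = pp s" for s using gP[of s] gs by simp
  have X3: "(\<Sum>a\<in>UNIV. \<Sum>s\<in>UNIV. KK s a m * KK a n s) = pp m * pp n - gg n m * Q"
  proof -
    have e: "KK s a m * KK a n s = (if s = a then (if a = n then pp m * pp s else 0) else 0)
       - (if s = a then pp m * gg n s * PP a else 0) - (if a = n then gg a m * PP s * pp s else 0)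
       + gg a m * PP a * (gg n s * PP s)" for a s
      by (simp add: Kd algebra_simps)
    have t1: "(\<Sum>a\<in>UNIV. \<Sum>s\<in>UNIV. (if s = a then (if a = n then pp m * pp s else 0) else 0)) = pp m * pp n"
      by simp
    have t2: "(\<Sum>a\<in>UNIV. \<Sum>s\<in>UNIV. (if s = a then pp m * gg n s * PP a else 0)) = pp m * pp n"
      using gP'[of n] by (simp add: sum_distrib_left[symmetric] mult.assoc)
    have t3: "(\<Sum>a\<in>UNIV. \<Sum>s\<in>UNIV. (if a = n then gg a m * PP s * pp s else 0)) = gg n m * Q"
      by (simp add: Q_def sum_distrib_left mult.assoc sum_if0)
    have t4: "(\<Sum>a\<in>UNIV. \<Sum>s\<in>UNIV. gg a m * PP a * (gg n s * PP s)) = pp m * pp n"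
      using gP[of m] gP'[of n] by (simp add: sum_distrib_left[symmetric] sum_distrib_right[symmetric])
    show ?thesis unfolding e using t1 t2 t3 t4 by (simp add: sum.distrib sum_subtractf)
  qed
  have Y: "(\<Sum>a\<in>UNIV. PP a * (\<Sum>s\<in>UNIV. LL s a m * gg n s)) + (\<Sum>a\<in>UNIV. \<Sum>s\<in>UNIV. gg a m * PP s * LL a n s)
      = (\<Sum>a\<in>UNIV. dgg a n m * PP a)"
  proof -
    have "(\<Sum>a\<in>UNIV. \<Sum>s\<in>UNIV. gg a m * PP s * LL a n s) = (\<Sum>s\<in>UNIV. \<Sum>a\<in>UNIV. gg a m * PP s * LL a n s)"
      by (rule sum.swap)
    also have "\<dots> = (\<Sum>a\<in>UNIV. PP a * (\<Sum>s\<in>UNIV. LL s a n * gg m s))"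
      by (simp add: sum_distrib_left Lsym[of _ n] gs[of _ m] algebra_simps)
    finally have "(\<Sum>a\<in>UNIV. PP a * (\<Sum>s\<in>UNIV. LL s a m * gg n s)) + (\<Sum>a\<in>UNIV. \<Sum>s\<in>UNIV. gg a m * PP s * LL a n s)
        = (\<Sum>a\<in>UNIV. PP a * (\<Sum>s\<in>UNIV. LL s a m * gg s n + LL s a n * gg m s))"
      by (simp add: sum.distrib distrib_left gs[of _ n])
    also have "\<dots> = (\<Sum>a\<in>UNIV. dgg a n m * PP a)"
    proof -
      have "(\<Sum>s\<in>UNIV. LL s a m * gg s n + LL s a n * gg m s) = dgg a n m" for a
        using F1[of a m n] dgs[of a m n] by simp
      then show ?thesis by (simp add: mult.commute)
    qed
    finally show ?thesis .
  qed
  have e2: "(LL s a m + KK s a m) * (LL a n s + KK a n s) = LL s a m * LL a n s + LL s a m * KK a n s + KK s a m * LL a n s + KK s a m * KK a n s" for a s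
    by (simp add: algebra_simps)
  have e3: "(LL s n m + KK s n m) * (l s + 3 * pp s) = LL s n m * l s + 3 * (LL s n m * pp s) + KK s n m * l s + 3 * (KK s n m * pp s)" for s
    by (simp add: algebra_simps)
  have L: "(\<Sum>a\<in>UNIV. dL a a n m + dK a a n m - (dL n a a m + dK n a a m)
            + (\<Sum>s\<in>UNIV. (LL s n m + KK s n m) * (LL a a s + KK a a s) - (LL s a m + KK s a m) * (LL a n s + KK a n s)))
     = (\<Sum>a\<in>UNIV. dL a a n m) + (\<Sum>a\<in>UNIV. dK a a n m) - (\<Sum>a\<in>UNIV. dL n a a m) - (\<Sum>a\<in>UNIV. dK n a a m)
       + (\<Sum>s\<in>UNIV. LL s n m * l s) + 3 * (\<Sum>s\<in>UNIV. LL s n m * pp s) + (\<Sum>s\<in>UNIV. KK s n m * l s) + 3 * (\<Sum>s\<in>UNIV. KK s n m * pp s)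
       - (\<Sum>a\<in>UNIV. \<Sum>s\<in>UNIV. LL s a m * LL a n s) - (\<Sum>a\<in>UNIV. \<Sum>s\<in>UNIV. LL s a m * KK a n s)
       - (\<Sum>a\<in>UNIV. \<Sum>s\<in>UNIV. KK s a m * LL a n s) - (\<Sum>a\<in>UNIV. \<Sum>s\<in>UNIV. KK s a m * KK a n s)"
    using S1 unfolding e3 by (simp only: e2 sum.distrib sum_subtractf sum_distrib_left[symmetric])
  have R: "(\<Sum>a\<in>UNIV. dL a a n m - dL n a a m + (\<Sum>s\<in>UNIV. LL s n m * LL a a s - LL s a m * LL a n s))
     = (\<Sum>a\<in>UNIV. dL a a n m) - (\<Sum>a\<in>UNIV. dL n a a m) + (\<Sum>s\<in>UNIV. LL s n m * l s) - (\<Sum>a\<in>UNIV. \<Sum>s\<in>UNIV. LL s a m * LL a n s)"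
    using S2 by (simp only: sum.distrib sum_subtractf)
  have dv: "(\<Sum>a\<in>UNIV. dPP a a + (\<Sum>s\<in>UNIV. LL a a s * PP s)) = (\<Sum>a\<in>UNIV. dPP a a) + (\<Sum>s\<in>UNIV. PP s * l s)"
    by (simp add: sum.distrib l_def sum_distrib_left sum_distrib_right mult.commute) (rule sum.swap)
  have ln: "l n = (\<Sum>a\<in>UNIV. LL a a n)" by (simp add: l_def)
  have sc: "(\<Sum>a\<in>UNIV. dgg a n m * PP a) = (\<Sum>a\<in>UNIV. dgg a n m * PP a)" ..
  show ?thesis unfolding L R dv Q_def[symmetric]
    using A B K1 K2 X1 X2 X3 Y by (simp add: algebra_simps)
qed



definition PP :: "(pt \<Rightarrow> real^4^4) \<Rightarrow> (pt \<Rightarrow> idx \<Rightarrow> real) \<Rightarrow> pt \<Rightarrow> idx \<Rightarrow> real" where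
  "PP g p y l = (\<Sum>r\<in>UNIV. ginv g y l r * p y r)"

definition KK :: "(pt \<Rightarrow> real^4^4) \<Rightarrow> (pt \<Rightarrow> idx \<Rightarrow> real) \<Rightarrow> pt \<Rightarrow> idx \<Rightarrow> idx \<Rightarrow> idx \<Rightarrow> real" where
  "KK g p y l m n = (if l = m then p y n else 0) - g y $ m $ n * PP g p y l"

lemma diff_if: "f differentiable at x \<Longrightarrow> (\<lambda>y. if c then k else f y) differentiable at x"
  by (cases c) auto

context
  fixes U :: "(real^4) set" and g :: "real^4 \<Rightarrow> real^4^4"
    and G :: "real^4 \<Rightarrow> 4 \<Rightarrow> 4 \<Rightarrow> 4 \<Rightarrow> real" and p :: "real^4 \<Rightarrow> 4 \<Rightarrow> real"
  assumes oU: "open U" and sr: "semi_riemannian_metric U g"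
    and ss: "semi_symmetric_metric_connection U g G p"
begin

lemma gsym: "y \<in> U \<Longrightarrow> g y $ i $ j = g y $ j $ i"
  using sr unfolding semi_riemannian_metric_def by blast

lemma gdet: "y \<in> U \<Longrightarrow> det (g y) \<noteq> 0"
  using sr unfolding semi_riemannian_metric_def by blast

lemma gsm: "smooth_on U (\<lambda>y. g y $ i $ j)"
  using sr unfolding semi_riemannian_metric_def by blast

lemma Gsm: "smooth_on U (\<lambda>y. G y l m n)"
  using ss unfolding semi_symmetric_metric_connection_def by blast

lemma psm: "smooth_on U (\<lambda>y. p y n)"
  using ss unfolding semi_symmetric_metric_connection_def by blast

lemma compat: "y \<in> U \<Longrightarrow> pd (\<lambda>y. g y $ n $ r) m y
          - (\<Sum>s\<in>UNIV. G y s m n * g y $ s $ r)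
          - (\<Sum>s\<in>UNIV. G y s m r * g y $ n $ s) = 0"
  using ss unfolding semi_symmetric_metric_connection_def by blast

lemma tors: "y \<in> U \<Longrightarrow> G y l m n - G y l n m =
          (if l = m then p y n else 0) - (if l = n then p y m else 0)"
  using ss unfolding semi_symmetric_metric_connection_def by blast

lemma dgsym: "y \<in> U \<Longrightarrow> pd (\<lambda>y. g y $ i $ j) k y = pd (\<lambda>y. g y $ j $ i) k y"
  by (rule pd_cong[OF oU]) (auto intro: gsym)

lemma g_diff: "y \<in> U \<Longrightarrow> (\<lambda>y. g y $ i $ j) differentiable at y"
  by (rule sm_diffble[OF gsm])

lemma dg_diff: "y \<in> U \<Longrightarrow> pd (\<lambda>y. g y $ i $ j) k differentiable at y"
  by (rule sm_diffble[OF sm_pd[OF gsm]])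

lemma p_diff: "y \<in> U \<Longrightarrow> (\<lambda>y. p y n) differentiable at y"
  by (rule sm_diffble[OF psm])

lemma G_diff: "y \<in> U \<Longrightarrow> (\<lambda>y. G y l m n) differentiable at y"
  by (rule sm_diffble[OF Gsm])

lemma h_diff: "x \<in> U \<Longrightarrow> (\<lambda>y. ginv g y i j) differentiable at x"
proof -
  assume x: "x \<in> U"
  let ?f = "\<lambda>y. det (\<chi> a b. if b = i then (if a = j then 1 else 0) else g y $a$b) / det (g y)"
  have d: "?f differentiable at x"
    using gdet[OF x]
    by (intro differentiable_divide diff_det) (auto intro!: diff_if g_diff[OF x])
  have e: "\<And>y. y \<in> U \<Longrightarrow> ?f y = ginv g y i j"
    unfolding ginv_def by (rule inv_cramer[OF gdet, symmetric])
  show ?thesis by (rule diff_cong[OF oU x e d])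
qed

lemma hg: "y \<in> U \<Longrightarrow> (\<Sum>s\<in>UNIV. ginv g y i s * g y $ s $ j) = (if i = j then 1 else 0)"
  unfolding ginv_def using inv_comp(2)[OF gdet] by blast

lemma gh: "y \<in> U \<Longrightarrow> (\<Sum>s\<in>UNIV. g y $ i $ s * ginv g y s j) = (if i = j then 1 else 0)"
  unfolding ginv_def using inv_comp(1)[OF gdet] by blast

lemma hsym: "y \<in> U \<Longrightarrow> ginv g y i j = ginv g y j i"
proof -
  assume y: "y \<in> U"
  have "transpose (g y) = g y" using gsym[OF y] by (simp add: transpose_def vec_eq_iff)
  then have "transpose (matrix_inv (g y)) = matrix_inv (g y)" using inv_sym gdet[OF y] by blast
  then have "matrix_inv (g y) $ i $ j = transpose (matrix_inv (g y)) $ i $ j" by simp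
  also have "\<dots> = matrix_inv (g y) $ j $ i" by (simp add: transpose_def)
  finally show ?thesis unfolding ginv_def .
qed

lemma P_diff: "x \<in> U \<Longrightarrow> (\<lambda>y. PP g p y l) differentiable at x"
  unfolding PP_def by (intro differentiable_sum differentiable_mult h_diff p_diff ballI) auto

lemma LC_diff: "x \<in> U \<Longrightarrow> (\<lambda>y. LC g y l m n) differentiable at x"
  unfolding LC_def by (intro differentiable_sum differentiable_mult differentiable_add differentiable_diff
      differentiable_const h_diff dg_diff ballI) auto

lemma K_diff: "x \<in> U \<Longrightarrow> (\<lambda>y. KK g p y l m n) differentiable at x"
  unfolding KK_def by (cases "l = m") (auto intro!: differentiable_diff differentiable_minus differentiable_mult g_diff P_diff p_diff)

lemma LCsym: "y \<in> U \<Longrightarrow> LC g y l m n = LC g y l n m"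
  unfolding LC_def using dgsym[of y m n] by (simp add: algebra_simps)

lemma gP: "y \<in> U \<Longrightarrow> (\<Sum>a\<in>UNIV. g y $ a $ s * PP g p y a) = p y s"
proof -
  assume y: "y \<in> U"
  have "(\<Sum>a\<in>UNIV. g y $ a $ s * PP g p y a) = (\<Sum>r\<in>UNIV. (\<Sum>a\<in>UNIV. g y $ s $ a * ginv g y a r) * p y r)"
    unfolding PP_def by (simp add: sum_distrib_left sum_distrib_right gsym[OF y, of _ s] algebra_simps) (rule sum.swap)
  also have "\<dots> = p y s" by (simp add: gh[OF y] if0_mult)
  finally show ?thesis .
qed

lemma G_decomp: assumes y: "y \<in> U" shows "G y l m n = LC g y l m n + KK g p y l m n"
proof -
  define A where "A r m n = (\<Sum>s\<in>UNIV. G y s m n * g y $ s $ r)" for r m n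
  define dg where "dg k i j = pd (\<lambda>z. g z $ i $ j) k y" for k i j
  have C: "dg m n r = A r m n + A n m r" for m n r
  proof -
    have "(\<Sum>s\<in>UNIV. G y s m r * g y $ n $ s) = A n m r"
      unfolding A_def by (intro sum.cong refl) (metis gsym[OF y])
    then show ?thesis using compat[OF y, of n r m] unfolding A_def dg_def by simp
  qed
  have T: "A r m n - A r n m = g y $ m $ r * p y n - g y $ n $ r * p y m" for r m n
  proof -
    have "A r m n - A r n m = (\<Sum>s\<in>UNIV. (G y s m n - G y s n m) * g y $ s $ r)"
      unfolding A_def by (simp add: sum_subtractf left_diff_distrib)
    also have "\<dots> = (\<Sum>s\<in>UNIV. (if s = m then p y n * g y $ s $ r else 0) - (if s = n then p y m * g y $ s $ r else 0))"
      by (intro sum.cong refl) (simp add: tors[OF y] left_diff_distrib)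
    finally show ?thesis by (simp add: sum_subtractf algebra_simps)
  qed
  have A2: "A r m n = 1/2 * (dg m n r + dg n m r - dg r m n) + g y $ r $ m * p y n - g y $ m $ n * p y r" for r m n
  proof -
    have s1: "g y $ m $ r = g y $ r $ m" "g y $ n $ r = g y $ r $ n" "g y $ n $ m = g y $ m $ n"
      using gsym[OF y] by auto
    have "2 * A r m n = (dg m n r + dg n m r - dg r m n) + 2 * (g y $ r $ m * p y n) - 2 * (g y $ m $ n * p y r)"
      using C[of m n r] C[of n m r] C[of r m n] T[of r m n] T[of n m r] T[of m n r]
      unfolding s1 by linarith
    then show ?thesis by (simp add: field_simps)
  qed
  have hg': "(\<Sum>r\<in>UNIV. ginv g y l r * g y $ s $ r) = (if l = s then 1 else 0)" for s
  proof -
    have "(\<Sum>r\<in>UNIV. ginv g y l r * g y $ s $ r) = (\<Sum>r\<in>UNIV. ginv g y l r * g y $ r $ s)"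
      by (intro sum.cong refl) (metis gsym[OF y])
    then show ?thesis using hg[OF y] by simp
  qed
  have "G y l m n = (\<Sum>s\<in>UNIV. G y s m n * (\<Sum>r\<in>UNIV. ginv g y l r * g y $ s $ r))"
    by (simp add: hg' if0_mult)
  also have "\<dots> = (\<Sum>r\<in>UNIV. ginv g y l r * A r m n)"
    unfolding A_def by (simp add: sum_distrib_left algebra_simps) (rule sum.swap)
  also have "\<dots> = (\<Sum>r\<in>UNIV. ginv g y l r * (1/2 * (dg m n r + dg n m r - dg r m n))
       + (ginv g y l r * g y $ r $ m) * p y n - g y $ m $ n * (ginv g y l r * p y r))"
    unfolding A2 by (simp add: algebra_simps)
  also have "\<dots> = LC g y l m n + KK g p y l m n"
  proof -
    have "(\<Sum>r\<in>UNIV. ginv g y l r * (1/2 * (dg m n r + dg n m r - dg r m n))) = LC g y l m n"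
      unfolding LC_def dg_def using dgsym[OF y]
      by (simp add: sum_distrib_left algebra_simps)
    moreover have "(\<Sum>r\<in>UNIV. (ginv g y l r * g y $ r $ m) * p y n) = (if l = m then p y n else 0)"
      by (simp add: sum_distrib_right[symmetric] hg[OF y])
    ultimately show ?thesis
      unfolding KK_def PP_def by (simp add: sum.distrib sum_subtractf sum_distrib_left)
  qed
  finally show ?thesis .
qed

lemma LCg: assumes y: "y \<in> U"
  shows "(\<Sum>s\<in>UNIV. LC g y s k i * g y $ s $ j) =
    1/2 * (pd (\<lambda>z. g z $ j $ i) k y + pd (\<lambda>z. g z $ j $ k) i y - pd (\<lambda>z. g z $ k $ i) j y)"
proof -
  define X where "X t = pd (\<lambda>z. g z $ t $ i) k y + pd (\<lambda>z. g z $ t $ k) i y - pd (\<lambda>z. g z $ k $ i) t y" for t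
  have hg2: "(\<Sum>s\<in>UNIV. ginv g y s t * g y $ s $ j) = (if t = j then 1 else 0)" for t
  proof -
    have "(\<Sum>s\<in>UNIV. ginv g y s t * g y $ s $ j) = (\<Sum>s\<in>UNIV. ginv g y t s * g y $ s $ j)"
      by (intro sum.cong refl) (metis hsym[OF y])
    then show ?thesis using hg[OF y] by simp
  qed
  have "(\<Sum>s\<in>UNIV. LC g y s k i * g y $ s $ j) = (\<Sum>s\<in>UNIV. \<Sum>t\<in>UNIV. 1/2 * (ginv g y s t * g y $ s $ j) * X t)"
    unfolding LC_def X_def by (simp add: sum_distrib_left sum_distrib_right algebra_simps)
  also have "\<dots> = (\<Sum>t\<in>UNIV. 1/2 * (\<Sum>s\<in>UNIV. ginv g y s t * g y $ s $ j) * X t)"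
    by (subst sum.swap) (simp add: sum_distrib_left sum_distrib_right)
  also have "\<dots> = 1/2 * X j" by (simp add: hg2 if0_mult)
  finally show ?thesis unfolding X_def .
qed

lemma F1: assumes y: "y \<in> U"
  shows "pd (\<lambda>z. g z $ i $ j) k y = (\<Sum>s\<in>UNIV. LC g y s k i * g y $ s $ j + LC g y s k j * g y $ i $ s)"
proof -
  have "(\<Sum>s\<in>UNIV. LC g y s k j * g y $ i $ s) = (\<Sum>s\<in>UNIV. LC g y s k j * g y $ s $ i)"
    by (intro sum.cong refl) (metis gsym[OF y])
  then have "(\<Sum>s\<in>UNIV. LC g y s k i * g y $ s $ j + LC g y s k j * g y $ i $ s)
     = 1/2 * (pd (\<lambda>z. g z $ j $ i) k y + pd (\<lambda>z. g z $ j $ k) i y - pd (\<lambda>z. g z $ k $ i) j y)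
     + 1/2 * (pd (\<lambda>z. g z $ i $ j) k y + pd (\<lambda>z. g z $ i $ k) j y - pd (\<lambda>z. g z $ k $ j) i y)"
    by (simp add: sum.distrib LCg[OF y])
  moreover have "pd (\<lambda>z. g z $ j $ i) k y = pd (\<lambda>z. g z $ i $ j) k y"
    "pd (\<lambda>z. g z $ j $ k) i y = pd (\<lambda>z. g z $ k $ j) i y"
    "pd (\<lambda>z. g z $ i $ k) j y = pd (\<lambda>z. g z $ k $ i) j y"
    using dgsym[OF y] by auto
  ultimately show ?thesis by (simp add: field_simps)
qed

lemma F2: assumes x: "x \<in> U"
  shows "(\<Sum>a\<in>UNIV. pd (\<lambda>y. g y $ a $ m) n x * PP g p x a + g x $ a $ m * pd (\<lambda>y. PP g p y a) n x)
     = pd (\<lambda>y. p y m) n x"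
proof -
  have "pd (\<lambda>y. p y m) n x = pd (\<lambda>y. \<Sum>a\<in>UNIV. g y $ a $ m * PP g p y a) n x"
    by (rule pd_cong[OF oU x]) (simp add: gP)
  also have "\<dots> = (\<Sum>a\<in>UNIV. pd (\<lambda>y. g y $ a $ m * PP g p y a) n x)"
    by (rule pd_sum) (auto intro!: differentiable_mult g_diff P_diff x)
  also have "\<dots> = (\<Sum>a\<in>UNIV. pd (\<lambda>y. g y $ a $ m) n x * PP g p x a + g x $ a $ m * pd (\<lambda>y. PP g p y a) n x)"
    by (intro sum.cong refl) (simp add: pd_mult g_diff P_diff x)
  finally show ?thesis ..
qed

lemma dK: assumes x: "x \<in> U"
  shows "pd (\<lambda>y. KK g p y l m n) k x = (if l = m then pd (\<lambda>y. p y n) k x else 0)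
     - (g x $ m $ n * pd (\<lambda>y. PP g p y l) k x + pd (\<lambda>y. g y $ m $ n) k x * PP g p x l)"
proof -
  have "pd (\<lambda>y. KK g p y l m n) k x = pd (\<lambda>y. (if l = m then p y n else 0)) k x - pd (\<lambda>y. g y $ m $ n * PP g p y l) k x"
    unfolding KK_def by (rule pd_diff) (cases "l = m"; auto intro!: differentiable_mult g_diff P_diff p_diff x)+
  moreover have "pd (\<lambda>y. (if l = m then p y n else 0)) k x = (if l = m then pd (\<lambda>y. p y n) k x else 0)"
    by (cases "l = m") (auto simp: pd_const)
  moreover have "pd (\<lambda>y. g y $ m $ n * PP g p y l) k x = g x $ m $ n * pd (\<lambda>y. PP g p y l) k x + pd (\<lambda>y. g y $ m $ n) k x * PP g p x l"
    by (simp add: pd_mult g_diff P_diff x)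
  ultimately show ?thesis by simp
qed

lemma Dg: assumes x: "x \<in> U"
  shows "cov_LC g p x k r = (\<Sum>a\<in>UNIV. g x $ r $ a * (pd (\<lambda>y. PP g p y a) k x + (\<Sum>s\<in>UNIV. LC g x a k s * PP g p x s)))"
proof -
  let ?P = "PP g p x" and ?L = "LC g x"
  have e1: "pd (\<lambda>y. p y r) k x = (\<Sum>a\<in>UNIV. pd (\<lambda>y. g y $ a $ r) k x * ?P a) + (\<Sum>a\<in>UNIV. g x $ a $ r * pd (\<lambda>y. PP g p y a) k x)"
    using F2[OF x, of r k] by (simp add: sum.distrib)
  have "(\<Sum>a\<in>UNIV. pd (\<lambda>y. g y $ a $ r) k x * ?P a)
      = (\<Sum>a\<in>UNIV. \<Sum>s\<in>UNIV. ?L s k a * g x $ s $ r * ?P a) + (\<Sum>a\<in>UNIV. \<Sum>s\<in>UNIV. ?L s k r * (g x $ a $ s * ?P a))"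
    unfolding F1[OF x] by (simp add: sum_distrib_right sum_distrib_left sum.distrib algebra_simps)
  also have "(\<Sum>a\<in>UNIV. \<Sum>s\<in>UNIV. ?L s k r * (g x $ a $ s * ?P a)) = (\<Sum>s\<in>UNIV. ?L s k r * p x s)"
    by (subst sum.swap) (simp add: sum_distrib_left[symmetric] gP[OF x])
  also have "(\<Sum>a\<in>UNIV. \<Sum>s\<in>UNIV. ?L s k a * g x $ s $ r * ?P a) = (\<Sum>a\<in>UNIV. \<Sum>s\<in>UNIV. g x $ r $ a * (?L a k s * ?P s))"
  proof -
    have "(\<Sum>a\<in>UNIV. \<Sum>s\<in>UNIV. ?L s k a * g x $ s $ r * ?P a) = (\<Sum>s\<in>UNIV. \<Sum>a\<in>UNIV. ?L s k a * g x $ s $ r * ?P a)"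
      by (rule sum.swap)
    also have "\<dots> = (\<Sum>s\<in>UNIV. \<Sum>a\<in>UNIV. g x $ r $ s * (?L s k a * ?P a))"
      by (intro sum.cong refl) (metis gsym[OF x] mult.commute mult.assoc)
    finally show ?thesis .
  qed
  finally have e2: "(\<Sum>a\<in>UNIV. pd (\<lambda>y. g y $ a $ r) k x * ?P a)
      = (\<Sum>a\<in>UNIV. \<Sum>s\<in>UNIV. g x $ r $ a * (?L a k s * ?P s)) + (\<Sum>s\<in>UNIV. ?L s k r * p x s)" .
  have e3: "(\<Sum>a\<in>UNIV. g x $ a $ r * pd (\<lambda>y. PP g p y a) k x) = (\<Sum>a\<in>UNIV. g x $ r $ a * pd (\<lambda>y. PP g p y a) k x)"
    by (intro sum.cong refl) (metis gsym[OF x])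
  have "cov_LC g p x k r = pd (\<lambda>y. p y r) k x - (\<Sum>l\<in>UNIV. ?L l k r * p x l)"
    unfolding cov_LC_def ..
  also have "\<dots> = (\<Sum>a\<in>UNIV. \<Sum>s\<in>UNIV. g x $ r $ a * (?L a k s * ?P s)) + (\<Sum>a\<in>UNIV. g x $ r $ a * pd (\<lambda>y. PP g p y a) k x)"
    using e1 e2 e3 by simp
  also have "\<dots> = (\<Sum>a\<in>UNIV. g x $ r $ a * (pd (\<lambda>y. PP g p y a) k x + (\<Sum>s\<in>UNIV. ?L a k s * ?P s)))"
    by (simp add: sum.distrib distrib_left sum_distrib_left)
  finally show ?thesis .
qed

lemma divf: assumes x: "x \<in> U"
  shows "(\<Sum>l\<in>UNIV. \<Sum>k\<in>UNIV. ginv g x l k * cov_LC g p x l k)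
    = (\<Sum>a\<in>UNIV. pd (\<lambda>y. PP g p y a) a x + (\<Sum>s\<in>UNIV. LC g x a a s * PP g p x s))"
proof -
  define DP where "DP l a = pd (\<lambda>y. PP g p y a) l x + (\<Sum>s\<in>UNIV. LC g x a l s * PP g p x s)" for l a
  have "(\<Sum>l\<in>UNIV. \<Sum>k\<in>UNIV. ginv g x l k * cov_LC g p x l k)
     = (\<Sum>l\<in>UNIV. \<Sum>k\<in>UNIV. \<Sum>a\<in>UNIV. ginv g x l k * g x $ k $ a * DP l a)"
    unfolding Dg[OF x] DP_def by (simp add: sum_distrib_left mult.assoc)
  also have "\<dots> = (\<Sum>l\<in>UNIV. \<Sum>a\<in>UNIV. (\<Sum>k\<in>UNIV. ginv g x l k * g x $ k $ a) * DP l a)"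
    by (rule sum.cong[OF refl]) (simp add: sum_distrib_right, rule sum.swap)
  also have "\<dots> = (\<Sum>l\<in>UNIV. DP l l)" by (simp add: hg[OF x] if0_mult)
  finally show ?thesis unfolding DP_def .
qed

lemma Qf: "(\<Sum>s\<in>UNIV. PP g p x s * p x s) = (\<Sum>l\<in>UNIV. \<Sum>k\<in>UNIV. ginv g x l k * p x l * p x k)"
  unfolding PP_def by (simp add: sum_distrib_right sum_distrib_left algebra_simps)

lemma ric_formula: assumes x: "x \<in> U"
  shows "Ric G x m n = Ric (LC g) x m n - 2 * cov_LC g p x n m
    - g x $ n $ m * (\<Sum>l\<in>UNIV. \<Sum>k\<in>UNIV. ginv g x l k * cov_LC g p x l k)
    + 2 * p x m * p x n - 2 * g x $ n $ m * (\<Sum>l\<in>UNIV. \<Sum>k\<in>UNIV. ginv g x l k * p x l * p x k)"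
proof -
  have pdG: "pd (\<lambda>y. G y l m' n') k x = pd (\<lambda>y. LC g y l m' n') k x + pd (\<lambda>y. KK g p y l m' n') k x" for l m' n' k
  proof -
    have "pd (\<lambda>y. G y l m' n') k x = pd (\<lambda>y. LC g y l m' n' + KK g p y l m' n') k x"
      by (rule pd_cong[OF oU x]) (rule G_decomp)
    then show ?thesis using pd_add[OF LC_diff[OF x] K_diff[OF x]] by simp
  qed
  note R = ricci_alg[where gg="\<lambda>i j. g x $ i $ j" and pp="p x" and PP="PP g p x" and LL="LC g x" and KK="KK g p x"
     and dgg="\<lambda>k i j. pd (\<lambda>y. g y $ i $ j) k x" and dpp="\<lambda>k i. pd (\<lambda>y. p y i) k x"
     and dPP="\<lambda>k l. pd (\<lambda>y. PP g p y l) k x" and dL="\<lambda>k l m n. pd (\<lambda>y. LC g y l m n) k x"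
     and dK="\<lambda>k l m n. pd (\<lambda>y. KK g p y l m n) k x" and n=n and m=m,
     OF gsym[OF x] gP[OF x] LCsym[OF x] F1[OF x] F2[OF x] dgsym[OF x] KK_def dK[OF x]]
  have RG: "Ric G x m n = (\<Sum>a\<in>UNIV. pd (\<lambda>y. LC g y a n m) a x + pd (\<lambda>y. KK g p y a n m) a x
       - (pd (\<lambda>y. LC g y a a m) n x + pd (\<lambda>y. KK g p y a a m) n x)
       + (\<Sum>s\<in>UNIV. (LC g x s n m + KK g p x s n m) * (LC g x a a s + KK g p x a a s)
          - (LC g x s a m + KK g p x s a m) * (LC g x a n s + KK g p x a n s)))"
    unfolding Ric_def Riem_def pdG G_decomp[OF x] by (simp add: algebra_simps)
  have RL: "Ric (LC g) x m n = (\<Sum>a\<in>UNIV. pd (\<lambda>y. LC g y a n m) a x - pd (\<lambda>y. LC g y a a m) n x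
       + (\<Sum>s\<in>UNIV. LC g x s n m * LC g x a a s - LC g x s a m * LC g x a n s))"
    unfolding Ric_def Riem_def by simp
  show ?thesis unfolding RG RL R divf[OF x, symmetric] Qf cov_LC_def by simp
qed

lemma symRic_sm: "smooth_on U (\<lambda>y. sym_Ric G y m n)"
proof -
  have "smooth_on U (\<lambda>y. (Ric G y m n + Ric G y n m) * inverse 2)"
    unfolding Ric_def Riem_def
    by (intro sm_mult sm_add sm_sum sm_diff sm_const sm_pd Gsm oU) auto
  then show ?thesis by (simp only: sym_Ric_def divide_inverse)
qed

lemma gsq_nz: assumes y: "y \<in> U" shows "(\<Sum>m\<in>UNIV. \<Sum>n\<in>UNIV. g y $ m $ n * g y $ m $ n) \<noteq> 0"
proof
  assume "(\<Sum>m\<in>UNIV. \<Sum>n\<in>UNIV. g y $ m $ n * g y $ m $ n) = 0"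
  then have "\<forall>m\<in>UNIV. (\<Sum>n\<in>UNIV. g y $ m $ n * g y $ m $ n) = 0"
    by (subst (asm) sum_nonneg_eq_0_iff) (auto intro: sum_nonneg)
  then have "\<And>m n. g y $ m $ n * g y $ m $ n = 0"
    by (simp add: sum_nonneg_eq_0_iff)
  then have "g y = mat 0" by (simp add: vec_eq_iff mat_def)
  then have "det (g y) = 0" by (simp only: det_0)
  then show False using gdet[OF y] by simp
qed

end

theorem mainTheorem9:
  fixes U :: "(real^4) set"
    and g :: "real^4 \<Rightarrow> real^4^4"
    and G :: "real^4 \<Rightarrow> 4 \<Rightarrow> 4 \<Rightarrow> 4 \<Rightarrow> real"
    and p :: "real^4 \<Rightarrow> 4 \<Rightarrow> real"
  assumes "open U"
    and "semi_riemannian_metric U g"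
    and "einstein_metric U g"
    and "semi_symmetric_metric_connection U g G p"
  shows "generalized_einstein U g G \<longleftrightarrow>
    (\<forall>x\<in>U. \<forall>m n.
       - cov_LC g p x m n - cov_LC g p x n m + 2 * p x n * p x m
       + (1/2) * g x $ m $ n * (\<Sum>l\<in>UNIV. \<Sum>k\<in>UNIV. ginv g x l k * cov_LC g p x l k)
       - (1/2) * g x $ m $ n * (\<Sum>l\<in>UNIV. \<Sum>k\<in>UNIV. ginv g x l k * p x l * p x k) = 0)"
proof -
  note oU = assms(1) and sr = assms(2) and ss = assms(4)
  obtain lam where lam_sm: "smooth_on U lam" and lam: "\<And>x m n. x \<in> U \<Longrightarrow> Ric (LC g) x m n = lam x * g x $ m $ n"
    using assms(3) unfolding einstein_metric_def by blast
  define dv where "dv x = (\<Sum>l\<in>UNIV. \<Sum>k\<in>UNIV. ginv g x l k * cov_LC g p x l k)" for x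
  define Q where "Q x = (\<Sum>l\<in>UNIV. \<Sum>k\<in>UNIV. ginv g x l k * p x l * p x k)" for x
  define E where "E x m n = - cov_LC g p x m n - cov_LC g p x n m + 2 * p x n * p x m
       + (1/2) * g x $ m $ n * dv x - (1/2) * g x $ m $ n * Q x" for x m n
  have SR: "sym_Ric G x m n = (lam x - 3/2 * dv x - 3/2 * Q x) * g x $ m $ n + E x m n" if x: "x \<in> U" for x m n
  proof -
    have gs: "g x $ n $ m = g x $ m $ n" using gsym[OF oU sr ss x] .
    show ?thesis
      unfolding sym_Ric_def ric_formula[OF oU sr ss x, of m n] ric_formula[OF oU sr ss x, of n m]
        lam[OF x] E_def dv_def[symmetric] Q_def[symmetric] gs
      by (simp add: field_simps)
  qed
  have trg: "(\<Sum>m\<in>UNIV. \<Sum>n\<in>UNIV. ginv g x m n * g x $ m $ n) = 4" if x: "x \<in> U" for x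
  proof -
    have "(\<Sum>n\<in>UNIV. ginv g x m n * g x $ m $ n) = 1" for m
    proof -
      have "(\<Sum>n\<in>UNIV. ginv g x m n * g x $ m $ n) = (\<Sum>n\<in>UNIV. ginv g x m n * g x $ n $ m)"
        by (intro sum.cong refl) (metis gsym[OF oU sr ss x])
      then show ?thesis using hg[OF oU sr ss x, of m m] by simp
    qed
    then show ?thesis by simp
  qed
  have trE: "(\<Sum>m\<in>UNIV. \<Sum>n\<in>UNIV. ginv g x m n * E x m n) = 0" if x: "x \<in> U" for x
  proof -
    have t1: "(\<Sum>m\<in>UNIV. \<Sum>n\<in>UNIV. ginv g x m n * cov_LC g p x m n) = dv x" unfolding dv_def ..
    have t2: "(\<Sum>m\<in>UNIV. \<Sum>n\<in>UNIV. ginv g x m n * cov_LC g p x n m) = dv x"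
    proof -
      have "(\<Sum>m\<in>UNIV. \<Sum>n\<in>UNIV. ginv g x m n * cov_LC g p x n m) = (\<Sum>n\<in>UNIV. \<Sum>m\<in>UNIV. ginv g x n m * cov_LC g p x n m)"
        by (subst sum.swap) (intro sum.cong refl, metis hsym[OF oU sr ss x])
      then show ?thesis unfolding dv_def by simp
    qed
    have t3: "(\<Sum>m\<in>UNIV. \<Sum>n\<in>UNIV. ginv g x m n * (p x n * p x m)) = Q x"
      unfolding Q_def by (simp add: algebra_simps)
    have "(\<Sum>m\<in>UNIV. \<Sum>n\<in>UNIV. ginv g x m n * E x m n)
      = - (\<Sum>m\<in>UNIV. \<Sum>n\<in>UNIV. ginv g x m n * cov_LC g p x m n)
        - (\<Sum>m\<in>UNIV. \<Sum>n\<in>UNIV. ginv g x m n * cov_LC g p x n m)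
        + 2 * (\<Sum>m\<in>UNIV. \<Sum>n\<in>UNIV. ginv g x m n * (p x n * p x m))
        + (1/2) * (dv x - Q x) * (\<Sum>m\<in>UNIV. \<Sum>n\<in>UNIV. ginv g x m n * g x $ m $ n)"
    proof -
      have e: "ginv g x m n * E x m n = - (ginv g x m n * cov_LC g p x m n) - (ginv g x m n * cov_LC g p x n m)
         + 2 * (ginv g x m n * (p x n * p x m)) + (1/2) * (dv x - Q x) * (ginv g x m n * g x $ m $ n)" for m n
        unfolding E_def by (simp add: field_simps)
      show ?thesis unfolding e
        by (simp only: sum.distrib sum_subtractf sum_negf sum_distrib_left[symmetric])
    qed
    then show ?thesis unfolding t1 t2 t3 trg[OF x] by (simp add: field_simps)
  qed
  show ?thesis
  proof
    assume "generalized_einstein U g G"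
    then obtain lam' where lam': "\<And>x m n. x \<in> U \<Longrightarrow> sym_Ric G x m n = lam' x * g x $ m $ n"
      unfolding generalized_einstein_def by blast
    show "\<forall>x\<in>U. \<forall>m n. - cov_LC g p x m n - cov_LC g p x n m + 2 * p x n * p x m
       + (1/2) * g x $ m $ n * (\<Sum>l\<in>UNIV. \<Sum>k\<in>UNIV. ginv g x l k * cov_LC g p x l k)
       - (1/2) * g x $ m $ n * (\<Sum>l\<in>UNIV. \<Sum>k\<in>UNIV. ginv g x l k * p x l * p x k) = 0"
    proof (intro ballI allI)
      fix x m n assume x: "x \<in> U"
      define c where "c = lam' x - lam x + 3/2 * dv x + 3/2 * Q x"
      have Ec: "E x i j = c * g x $ i $ j" for i j
        using SR[OF x, of i j] lam'[OF x, of i j] unfolding c_def by (simp add: algebra_simps)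
      have "0 = (\<Sum>m\<in>UNIV. \<Sum>n\<in>UNIV. ginv g x m n * E x m n)" using trE[OF x] by simp
      also have "\<dots> = c * (\<Sum>m\<in>UNIV. \<Sum>n\<in>UNIV. ginv g x m n * g x $ m $ n)"
        unfolding Ec by (simp add: sum_distrib_left algebra_simps)
      finally have "c = 0" using trg[OF x] by simp
      then have "E x m n = 0" using Ec by simp
      then show "- cov_LC g p x m n - cov_LC g p x n m + 2 * p x n * p x m
       + (1/2) * g x $ m $ n * (\<Sum>l\<in>UNIV. \<Sum>k\<in>UNIV. ginv g x l k * cov_LC g p x l k)
       - (1/2) * g x $ m $ n * (\<Sum>l\<in>UNIV. \<Sum>k\<in>UNIV. ginv g x l k * p x l * p x k) = 0"
        unfolding E_def dv_def Q_def .
    qed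
  next
    assume H: "\<forall>x\<in>U. \<forall>m n. - cov_LC g p x m n - cov_LC g p x n m + 2 * p x n * p x m
       + (1/2) * g x $ m $ n * (\<Sum>l\<in>UNIV. \<Sum>k\<in>UNIV. ginv g x l k * cov_LC g p x l k)
       - (1/2) * g x $ m $ n * (\<Sum>l\<in>UNIV. \<Sum>k\<in>UNIV. ginv g x l k * p x l * p x k) = 0"
    then have E0: "\<And>x m n. x \<in> U \<Longrightarrow> E x m n = 0" unfolding E_def dv_def Q_def by blast
    define lam' where "lam' y = (\<Sum>m\<in>UNIV. \<Sum>n\<in>UNIV. sym_Ric G y m n * g y $ m $ n)
        * inverse (\<Sum>m\<in>UNIV. \<Sum>n\<in>UNIV. g y $ m $ n * g y $ m $ n)" for y
    have sm: "smooth_on U lam'"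
      unfolding lam'_def
      by (intro sm_mult sm_inverse sm_sum oU symRic_sm[OF oU sr ss] gsm[OF oU sr ss] gsq_nz[OF oU sr ss]) auto
    have "\<forall>x\<in>U. \<forall>m n. sym_Ric G x m n = lam' x * g x $ m $ n"
    proof (intro ballI allI)
      fix x m n assume x: "x \<in> U"
      define c where "c = lam x - 3/2 * dv x - 3/2 * Q x"
      have Sc: "sym_Ric G x i j = c * g x $ i $ j" for i j using SR[OF x, of i j] E0[OF x] unfolding c_def by simp
      have "lam' x = c * (\<Sum>m\<in>UNIV. \<Sum>n\<in>UNIV. g x $ m $ n * g x $ m $ n)
          * inverse (\<Sum>m\<in>UNIV. \<Sum>n\<in>UNIV. g x $ m $ n * g x $ m $ n)"
        unfolding lam'_def Sc by (simp add: sum_distrib_left mult.assoc)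
      also have "\<dots> = c" using gsq_nz[OF oU sr ss x] by simp
      finally show "sym_Ric G x m n = lam' x * g x $ m $ n" using Sc by simp
    qed
    then show "generalized_einstein U g G" unfolding generalized_einstein_def using sm by blast
  qed
qed

end
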